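(* Let the premiums $\{X_n, n\geq 1\}$, the claims $\{Y_n, n\geq 1\}$ and the rates of interest $\{I_n, n\geq 1\}$ be mutually independent sequences of nonnegative i.i.d. random variables with finite expectations. For $u\geq 0$ define $U_0=u$, $U_n=(U_{n-1}+X_n)(1+I_n)-Y_n$ for $n\geq 1$, and $\Psi(u)=\mathbb{P}\big(\bigcup_{n=1}^\infty\{U_n<0\}\big)$. Let $$S_n=\sum_{i=1}^n\Big(\big(Y_i(1+I_i)^{-1}-X_i\big)\prod_{j=1}^{i-1}(1+I_j)^{-1}\Big),\quad n\geq 1,$$ with the empty product equal to $1$. If there exists a positive real number $R$ satisfying $$\mathbb{E}\Big(e^{R\left(Y_1(1+I_1)^{-1}-X_1\right)}\Big)\leq 1,$$ then $\{Z_n=e^{RS_n}, n\geq 1\}$ is a supermartingale (i.e. $\mathbb{E}(Z_{n+1}\mid Z_1,\dots,Z_n)\leq Z_n$ a.s. for all $n$), and $\Psi(u)\leq e^{-Ru}$ for all $u>0$. *)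

theory Defs
  imports "HOL-Probability.Probability"
begin

fun surplus :: "real \<Rightarrow> (nat \<Rightarrow> 'a \<Rightarrow> real) \<Rightarrow> (nat \<Rightarrow> 'a \<Rightarrow> real) \<Rightarrow> (nat \<Rightarrow> 'a \<Rightarrow> real)
    \<Rightarrow> nat \<Rightarrow> 'a \<Rightarrow> real" where
  "surplus u X Y I 0 \<omega> = u"
| "surplus u X Y I (Suc n) \<omega> =
     (surplus u X Y I n \<omega> + X (Suc n) \<omega>) * (1 + I (Suc n) \<omega>) - Y (Suc n) \<omega>"

definition ruin_prob :: "'a measure \<Rightarrow> (nat \<Rightarrow> 'a \<Rightarrow> real) \<Rightarrow> (nat \<Rightarrow> 'a \<Rightarrow> real)
    \<Rightarrow> (nat \<Rightarrow> 'a \<Rightarrow> real) \<Rightarrow> real \<Rightarrow> real" where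
  "ruin_prob M X Y I u = measure M (\<Union>n\<in>{1..}. {\<omega> \<in> space M. surplus u X Y I n \<omega> < 0})"

definition disc_loss :: "(nat \<Rightarrow> 'a \<Rightarrow> real) \<Rightarrow> (nat \<Rightarrow> 'a \<Rightarrow> real) \<Rightarrow> (nat \<Rightarrow> 'a \<Rightarrow> real)
    \<Rightarrow> nat \<Rightarrow> 'a \<Rightarrow> real" where
  "disc_loss X Y I n \<omega> =
     (\<Sum>i=1..n. (Y i \<omega> * inverse (1 + I i \<omega>) - X i \<omega>) * (\<Prod>j\<in>{1..<i}. inverse (1 + I j \<omega>)))"

text \<open>The joint family of all premiums, claims and interest rates, indexed by
  (0,n) for X_n, (1,n) for Y_n, (2,n) for I_n.\<close>
definition risk_family :: "(nat \<Rightarrow> 'a \<Rightarrow> real) \<Rightarrow> (nat \<Rightarrow> 'a \<Rightarrow> real) \<Rightarrow> (nat \<Rightarrow> 'a \<Rightarrow> real)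
    \<Rightarrow> nat \<times> nat \<Rightarrow> 'a \<Rightarrow> real" where
  "risk_family X Y I k = (if fst k = 0 then X (snd k) else if fst k = 1 then Y (snd k) else I (snd k))"

definition gen_sigma :: "'a measure \<Rightarrow> (nat \<Rightarrow> 'a \<Rightarrow> real) \<Rightarrow> nat \<Rightarrow> 'a measure" where
  "gen_sigma M Z n = sigma (space M) {Z i -` A \<inter> space M | i A. i \<in> {1..n} \<and> A \<in> sets borel}"

end

theory Submission
  imports Defs
begin


locale risk = prob_space M for M :: "'a measure" +
  fixes X Y I :: "nat \<Rightarrow> 'a \<Rightarrow> real" and R :: real
  assumes indep: "indep_vars (\<lambda>_. borel) (risk_family X Y I) ({0,1,2} \<times> {1..})"
    and idX: "\<And>n. n \<ge> 1 \<Longrightarrow> distr M borel (X n) = distr M borel (X 1)"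
    and idY: "\<And>n. n \<ge> 1 \<Longrightarrow> distr M borel (Y n) = distr M borel (Y 1)"
    and idI: "\<And>n. n \<ge> 1 \<Longrightarrow> distr M borel (I n) = distr M borel (I 1)"
    and nonneg: "\<And>n \<omega>. n \<ge> 1 \<Longrightarrow> \<omega> \<in> space M \<Longrightarrow> X n \<omega> \<ge> 0 \<and> Y n \<omega> \<ge> 0 \<and> I n \<omega> \<ge> 0"
    and Rpos: "R > 0"
    and Rcond: "(\<integral>\<^sup>+ \<omega>. ennreal (exp (R * (Y 1 \<omega> * inverse (1 + I 1 \<omega>) - X 1 \<omega>))) \<partial>M) \<le> 1"

definition ifn :: "(nat \<times> nat \<Rightarrow> real) \<Rightarrow> nat \<Rightarrow> real" where
  "ifn x j = inverse (1 + max 0 (x (2,j)))"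
definition wf :: "(nat \<times> nat \<Rightarrow> real) \<Rightarrow> nat \<Rightarrow> real" where
  "wf x i = x (1,i) * ifn x i - x (0,i)"
definition pf :: "(nat \<times> nat \<Rightarrow> real) \<Rightarrow> nat \<Rightarrow> real" where
  "pf x n = (\<Prod>j\<in>{1..n}. ifn x j)"
definition dl :: "(nat \<times> nat \<Rightarrow> real) \<Rightarrow> nat \<Rightarrow> real" where
  "dl x n = (\<Sum>i=1..n. wf x i * pf x (i - 1))"
definition JJ :: "nat \<Rightarrow> (nat \<times> nat) set" where
  "JJ n = {0,1,2} \<times> {1..n}"

lemma ifn_pos: "0 < ifn x j"
  by (auto simp: ifn_def)
lemma ifn_le1: "ifn x j \<le> 1"
  unfolding ifn_def using le_imp_inverse_le[of 1 "1 + max 0 (x(2,j))"] by simp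

lemma pf_pos: "0 < pf x n"
  unfolding pf_def by (auto intro!: prod_pos ifn_pos)
lemma pf_le1: "pf x n \<le> 1"
  unfolding pf_def by (rule prod_le_1) (auto intro: ifn_pos less_imp_le ifn_le1)

lemma dl_Suc: "dl x (Suc n) = dl x n + wf x (Suc n) * pf x n"
  by (simp add: dl_def)

lemma ifn_restrict: "j \<in> {1..m} \<Longrightarrow> ifn (restrict x (JJ m)) j = ifn x j"
  unfolding ifn_def JJ_def by auto
lemma wf_restrict: "j \<in> {1..m} \<Longrightarrow> wf (restrict x (JJ m)) j = wf x j"
  unfolding wf_def using ifn_restrict[of j m x] by (simp add: JJ_def)
lemma pf_restrict: "n \<le> m \<Longrightarrow> pf (restrict x (JJ m)) n = pf x n"
  unfolding pf_def by (intro prod.cong refl ifn_restrict) auto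
lemma dl_restrict: "n \<le> m \<Longrightarrow> dl (restrict x (JJ m)) n = dl x n"
  unfolding dl_def by (intro sum.cong refl arg_cong2[where f="(*)"] wf_restrict pf_restrict) auto

lemma meas_comp: "(a,j) \<in> JJ m \<Longrightarrow> (\<lambda>x. x (a,j)) \<in> borel_measurable (PiM (JJ m) (\<lambda>_. borel))"
  by (rule measurable_component_singleton)

lemma ifn_meas: "j \<in> {1..m} \<Longrightarrow> (\<lambda>x. ifn x j) \<in> borel_measurable (PiM (JJ m) (\<lambda>_. borel))"
  unfolding ifn_def using meas_comp[of 2 j m] by (auto simp: JJ_def)
lemma wf_meas: "j \<in> {1..m} \<Longrightarrow> (\<lambda>x. wf x j) \<in> borel_measurable (PiM (JJ m) (\<lambda>_. borel))"
  unfolding wf_def using meas_comp[of 1 j m] meas_comp[of 0 j m] ifn_meas[of j m] by (auto simp: JJ_def)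
lemma pf_meas: "n \<le> m \<Longrightarrow> (\<lambda>x. pf x n) \<in> borel_measurable (PiM (JJ m) (\<lambda>_. borel))"
  unfolding pf_def by (intro borel_measurable_prod ifn_meas) auto
lemma dl_meas: "n \<le> m \<Longrightarrow> (\<lambda>x. dl x n) \<in> borel_measurable (PiM (JJ m) (\<lambda>_. borel))"
  unfolding dl_def by (intro borel_measurable_sum borel_measurable_times wf_meas pf_meas) auto

lemma alg_aux:
  fixes Q a u S x y :: real
  assumes "Q > 0" "a > 0"
  shows "((u - S) * Q + x) * a - y = (u - (S + (y * inverse a - x) * inverse Q)) * (Q * a)"
  using assms by (simp add: field_simps)

primrec Vg :: "(nat \<Rightarrow> 'a \<Rightarrow> real) \<Rightarrow> (nat \<Rightarrow> 'a set) \<Rightarrow> nat \<Rightarrow> 'a \<Rightarrow> real" where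
  "Vg Zf Bf 0 \<omega> = Zf 0 \<omega>"
| "Vg Zf Bf (Suc N) \<omega> = (if \<omega> \<in> Bf N then Zf (Suc N) \<omega> else Vg Zf Bf N \<omega>)"

context risk begin

abbreviation "rf \<equiv> risk_family X Y I"
definition xi :: "nat \<Rightarrow> 'a \<Rightarrow> nat \<times> nat \<Rightarrow> real" where
  "xi n \<omega> = restrict (\<lambda>k. rf k \<omega>) (JJ n)"

lemma rf_meas: "k \<in> {0,1,2} \<times> {1..} \<Longrightarrow> rf k \<in> borel_measurable M"
  using indep unfolding indep_vars_def by auto

lemma xi_meas: "xi n \<in> measurable M (PiM (JJ n) (\<lambda>_. borel))"
  unfolding xi_def by (intro measurable_restrict rf_meas) (auto simp: JJ_def)

lemma disc_eq: "\<omega> \<in> space M \<Longrightarrow> disc_loss X Y I n \<omega> = dl (\<lambda>k. rf k \<omega>) n"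
  unfolding disc_loss_def dl_def wf_def pf_def ifn_def
  by (intro sum.cong refl arg_cong2[where f="(*)"] prod.cong)
     (auto simp: risk_family_def nonneg max_def)

lemma disc_xi: "\<omega> \<in> space M \<Longrightarrow> n \<le> m \<Longrightarrow> disc_loss X Y I n \<omega> = dl (xi m \<omega>) n"
  by (simp add: disc_eq xi_def dl_restrict)

definition theta :: "nat \<Rightarrow> 'a \<Rightarrow> nat \<Rightarrow> real" where
  "theta m \<omega> = (\<lambda>j\<in>{0,1,2}. rf (j,m) \<omega>)"

definition wt :: "(nat \<Rightarrow> real) \<Rightarrow> real" where
  "wt t = t 1 * inverse (1 + max 0 (t 2)) - t 0"

lemma wt_meas[measurable]: "wt \<in> borel_measurable (PiM {0,1,2::nat} (\<lambda>_. borel))"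
  unfolding wt_def by measurable

lemma wf_theta: "wf (\<lambda>k. rf k \<omega>) m = wt (theta m \<omega>)"
  by (simp add: wf_def wt_def theta_def ifn_def)

lemma theta_meas: "m \<ge> 1 \<Longrightarrow> theta m \<in> measurable M (PiM {0,1,2} (\<lambda>_. borel))"
  unfolding theta_def by (intro measurable_restrict rf_meas) auto

lemma theta_distr:
  assumes m: "m \<ge> 1"
  shows "distr M (PiM {0,1,2} (\<lambda>_. borel)) (theta m) = distr M (PiM {0,1,2} (\<lambda>_. borel)) (theta 1)"
proof -
  have ind_m: "indep_vars (\<lambda>_. borel) (\<lambda>j \<omega>. rf (j,m) \<omega>) {0,1,2}" if m: "m \<ge> 1" for m
  proof -
    have "indep_vars (\<lambda>j. PiM {(j,m)} (\<lambda>_. borel)) (\<lambda>j \<omega>. restrict (\<lambda>i. rf i \<omega>) {(j,m)}) {0,1,2}"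
      by (rule indep_vars_restrict[OF indep]) (use m in \<open>auto simp: disjoint_family_on_def\<close>)
    then have "indep_vars (\<lambda>_. borel) (\<lambda>j \<omega>. (\<lambda>x. x (j,m)) (restrict (\<lambda>i. rf i \<omega>) {(j,m)})) {0,1,2}"
      by (rule indep_vars_compose2) (rule measurable_component_singleton, simp)
    then show ?thesis by simp
  qed
  have rv: "\<And>j. j \<in> {0,1,2} \<Longrightarrow> random_variable borel (\<lambda>\<omega>. rf (j,m) \<omega>)" if "m \<ge> 1" for m
    using that by (intro rf_meas) auto
  have "distr M (PiM {0,1,2} (\<lambda>_. borel)) (theta m) = PiM {0,1,2} (\<lambda>j. distr M borel (\<lambda>\<omega>. rf (j,m) \<omega>))"
    using ind_m[OF m] indep_vars_iff_distr_eq_PiM'[where I="{0,1,2::nat}" and M'="\<lambda>_. borel" and X="\<lambda>j \<omega>. rf (j,m) \<omega>"] rv[OF m]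
    unfolding theta_def by simp
  also have "\<dots> = PiM {0,1,2} (\<lambda>j. distr M borel (\<lambda>\<omega>. rf (j,1) \<omega>))"
    using idX[OF m] idY[OF m] idI[OF m] by (intro PiM_cong refl) (auto simp: risk_family_def)
  also have "\<dots> = distr M (PiM {0,1,2} (\<lambda>_. borel)) (theta 1)"
    using ind_m[of 1] indep_vars_iff_distr_eq_PiM'[where I="{0,1,2::nat}" and M'="\<lambda>_. borel" and X="\<lambda>j \<omega>. rf (j,1) \<omega>"] rv[of 1]
    unfolding theta_def by simp
  finally show ?thesis .
qed

lemma W_shift:
  assumes m: "m \<ge> 1"
  shows "(\<integral>\<^sup>+\<omega>. ennreal (exp (R * (wf (\<lambda>k. rf k \<omega>) m * p))) \<partial>M)
       = (\<integral>\<^sup>+\<omega>. ennreal (exp (R * (wf (\<lambda>k. rf k \<omega>) 1 * p))) \<partial>M)"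
proof -
  let ?g = "\<lambda>t. ennreal (exp (R * (wt t * p)))"
  have g: "?g \<in> borel_measurable (PiM {0,1,2::nat} (\<lambda>_. borel))"
    by measurable
  have "(\<integral>\<^sup>+\<omega>. ?g (theta m \<omega>) \<partial>M) = (\<integral>\<^sup>+t. ?g t \<partial>distr M (PiM {0,1,2} (\<lambda>_. borel)) (theta m))"
    using g by (subst nn_integral_distr[OF theta_meas[OF m]]) auto
  also have "\<dots> = (\<integral>\<^sup>+t. ?g t \<partial>distr M (PiM {0,1,2} (\<lambda>_. borel)) (theta 1))"
    by (subst theta_distr[OF m]) (rule refl)
  also have "\<dots> = (\<integral>\<^sup>+\<omega>. ?g (theta 1 \<omega>) \<partial>M)"
    using g by (subst nn_integral_distr[OF theta_meas]) auto
  finally show ?thesis by (simp add: wf_theta)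
qed

lemma W1_bound:
  assumes p: "0 \<le> p" "p \<le> 1"
  shows "(\<integral>\<^sup>+\<omega>. ennreal (exp (R * (wf (\<lambda>k. rf k \<omega>) 1 * p))) \<partial>M) \<le> 1"
proof -
  let ?W = "\<lambda>\<omega>. Y 1 \<omega> * inverse (1 + I 1 \<omega>) - X 1 \<omega>"
  have Wm: "?W \<in> borel_measurable M"
  proof -
    have [measurable]: "X 1 \<in> borel_measurable M" "Y 1 \<in> borel_measurable M" "I 1 \<in> borel_measurable M"
      using rf_meas[of "(0,1)"] rf_meas[of "(1,1)"] rf_meas[of "(2,1)"] by (auto simp: risk_family_def)
    show ?thesis by measurable
  qed
  have pt: "exp (R * (wf (\<lambda>k. rf k \<omega>) 1 * p)) \<le> (1 - p) + p * exp (R * ?W \<omega>)" if "\<omega> \<in> space M" for \<omega>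
  proof -
    have eq: "wf (\<lambda>k. rf k \<omega>) 1 = ?W \<omega>"
      using nonneg[of 1 \<omega>] that by (simp add: wf_def ifn_def risk_family_def)
    have c: "exp (p * (R * ?W \<omega>)) \<le> (1 - p) + p * exp (R * ?W \<omega>)"
      using convex_onD[OF exp_convex, of p 0 "R * ?W \<omega>"] p by simp
    have e2: "R * (?W \<omega> * p) = p * (R * ?W \<omega>)" by simp
    show ?thesis unfolding eq e2 by (rule c)
  qed
  have "(\<integral>\<^sup>+\<omega>. ennreal (exp (R * (wf (\<lambda>k. rf k \<omega>) 1 * p))) \<partial>M)
      \<le> (\<integral>\<^sup>+\<omega>. ennreal (1 - p) + ennreal p * ennreal (exp (R * ?W \<omega>)) \<partial>M)"
    using pt p by (intro nn_integral_mono) (simp add: ennreal_plus[symmetric] ennreal_mult[symmetric] del: ennreal_plus)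
  also have "\<dots> = ennreal (1 - p) + ennreal p * (\<integral>\<^sup>+\<omega>. ennreal (exp (R * ?W \<omega>)) \<partial>M)"
    using Wm by (subst nn_integral_add) (auto simp: nn_integral_cmult emeasure_space_1)
  also have "\<dots> \<le> ennreal (1 - p) + ennreal p * 1"
    using Rcond by (intro add_left_mono mult_left_mono) auto
  also have "\<dots> = 1"
    using p by (simp add: ennreal_plus[symmetric] del: ennreal_plus)
  finally show ?thesis .
qed


lemma W_meas: "m \<ge> 1 \<Longrightarrow> (\<lambda>\<omega>. wf (\<lambda>k. rf k \<omega>) m) \<in> borel_measurable M"
  unfolding wf_theta by (rule measurable_compose[OF theta_meas wt_meas])

lemma W_bound:
  assumes m: "m \<ge> 1" and p: "0 \<le> p" "p \<le> 1"
  shows "(\<integral>\<^sup>+\<omega>. ennreal (exp (R * (wf (\<lambda>k. rf k \<omega>) m * p))) \<partial>M) \<le> 1"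
  using W_shift[OF m, of p] W1_bound[OF p] by simp

definition eta :: "nat \<Rightarrow> 'a \<Rightarrow> nat \<times> nat \<Rightarrow> real" where
  "eta n \<omega> = restrict (\<lambda>i. rf i \<omega>) ({0,1,2} \<times> {Suc n})"

lemma eta_meas: "eta n \<in> measurable M (PiM ({0,1,2} \<times> {Suc n}) (\<lambda>_. borel))"
  unfolding eta_def by (intro measurable_restrict rf_meas) auto

lemma wf_eta_meas: "(\<lambda>y. wf y (Suc n)) \<in> borel_measurable (PiM ({0,1,2} \<times> {Suc n}) (\<lambda>_. borel))"
proof -
  have c: "(\<lambda>x. x (a, Suc n)) \<in> borel_measurable (PiM ({0,1,2} \<times> {Suc n}) (\<lambda>_. borel))" if "a \<in> {0,1,2}" for a
    by (rule measurable_component_singleton) (use that in auto)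
  show ?thesis unfolding wf_def ifn_def using c[of 0] c[of 1] c[of 2] by simp
qed

lemma wf_eta: "wf (eta n \<omega>) (Suc n) = wf (\<lambda>k. rf k \<omega>) (Suc n)"
  by (simp add: eta_def wf_def ifn_def)

lemma indep_xi_eta:
  "indep_var (PiM (JJ n) (\<lambda>_. borel)) (xi n) (PiM ({0,1,2} \<times> {Suc n}) (\<lambda>_. borel)) (eta n)"
proof -
  define K where "K b = (if b then JJ n else {0,1,2} \<times> {Suc n})" for b
  have "indep_vars (\<lambda>b. PiM (K b) (\<lambda>_. borel)) (\<lambda>b \<omega>. restrict (\<lambda>i. rf i \<omega>) (K b)) UNIV"
    by (rule indep_vars_restrict[OF indep]) (auto simp: K_def JJ_def disjoint_family_on_def)
  moreover have "indep_vars (\<lambda>b. PiM (K b) (\<lambda>_. borel)) (\<lambda>b \<omega>. restrict (\<lambda>i. rf i \<omega>) (K b)) UNIV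
     = indep_vars (case_bool (PiM (JJ n) (\<lambda>_. borel)) (PiM ({0,1,2} \<times> {Suc n}) (\<lambda>_. borel)))
          (case_bool (xi n) (eta n)) UNIV"
    by (intro indep_vars_cong) (auto simp: K_def xi_def eta_def split: bool.split)
  ultimately show ?thesis
    unfolding indep_var_def by simp
qed

lemma key:
  assumes G[measurable]: "G \<in> borel_measurable (PiM (JJ n) (\<lambda>_. borel))"
  shows "(\<integral>\<^sup>+\<omega>. G (xi n \<omega>) * ennreal (exp (R * (wf (\<lambda>k. rf k \<omega>) (Suc n) * pf (xi n \<omega>) n))) \<partial>M)
      \<le> (\<integral>\<^sup>+\<omega>. G (xi n \<omega>) \<partial>M)"
proof -
  let ?S = "PiM (JJ n) (\<lambda>_. borel)"
  let ?T = "PiM ({0,1,2} \<times> {Suc n}) (\<lambda>_. borel)"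
  let ?W = "\<lambda>\<omega>. wf (\<lambda>k. rf k \<omega>) (Suc n)"
  let ?F = "\<lambda>z. G (fst z) * ennreal (exp (R * (wf (snd z) (Suc n) * pf (fst z) n)))"
  have etam[measurable]: "eta n \<in> measurable M ?T" by (rule eta_meas)
  have xim[measurable]: "xi n \<in> measurable M ?S" by (rule xi_meas)
  have pfm[measurable]: "(\<lambda>x. pf x n) \<in> borel_measurable ?S" by (rule pf_meas) simp
  have wfm[measurable]: "(\<lambda>y. wf y (Suc n)) \<in> borel_measurable ?T" by (rule wf_eta_meas)
  have Wm[measurable]: "?W \<in> borel_measurable M" by (rule W_meas) simp
  have Fm: "?F \<in> borel_measurable (?S \<Otimes>\<^sub>M ?T)" by measurable
  interpret nu: prob_space "distr M ?T (eta n)" by (rule prob_space_distr[OF etam])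
  have ind: "distr M ?S (xi n) \<Otimes>\<^sub>M distr M ?T (eta n) = distr M (?S \<Otimes>\<^sub>M ?T) (\<lambda>x. (xi n x, eta n x))"
    using indep_xi_eta[of n] by (simp add: indep_var_distribution_eq)
  have Fm': "?F \<in> borel_measurable (distr M ?S (xi n) \<Otimes>\<^sub>M distr M ?T (eta n))"
    using Fm by (simp cong: measurable_cong_sets)
  have "(\<integral>\<^sup>+\<omega>. G (xi n \<omega>) * ennreal (exp (R * (?W \<omega> * pf (xi n \<omega>) n))) \<partial>M)
      = (\<integral>\<^sup>+\<omega>. ?F (xi n \<omega>, eta n \<omega>) \<partial>M)" by (simp add: wf_eta)
  also have "\<dots> = (\<integral>\<^sup>+z. ?F z \<partial>distr M (?S \<Otimes>\<^sub>M ?T) (\<lambda>x. (xi n x, eta n x)))"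
    by (rule nn_integral_distr[symmetric, OF measurable_Pair[OF xim etam]])
       (unfold measurable_cong_sets[OF sets_distr refl], rule Fm)
  also have "\<dots> = (\<integral>\<^sup>+z. ?F z \<partial>(distr M ?S (xi n) \<Otimes>\<^sub>M distr M ?T (eta n)))"
    by (simp only: ind)
  also have "\<dots> = (\<integral>\<^sup>+a. \<integral>\<^sup>+b. ?F (a,b) \<partial>distr M ?T (eta n) \<partial>distr M ?S (xi n))"
    by (rule nu.nn_integral_fst[symmetric, OF Fm'])
  also have "\<dots> \<le> (\<integral>\<^sup>+a. G a \<partial>distr M ?S (xi n))"
  proof (rule nn_integral_mono)
    fix a
    have "(\<integral>\<^sup>+b. ?F (a,b) \<partial>distr M ?T (eta n)) = G a * (\<integral>\<^sup>+b. ennreal (exp (R * (wf b (Suc n) * pf a n))) \<partial>distr M ?T (eta n))"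
      unfolding fst_conv snd_conv by (rule nn_integral_cmult) (unfold measurable_cong_sets[OF sets_distr refl], measurable)
    also have "\<dots> = G a * (\<integral>\<^sup>+\<omega>. ennreal (exp (R * (?W \<omega> * pf a n))) \<partial>M)"
      by (subst nn_integral_distr[OF etam]) (measurable, simp add: wf_eta)
    also have "\<dots> \<le> G a * 1"
      by (intro mult_left_mono W_bound) (auto intro: less_imp_le pf_pos pf_le1)
    finally show "(\<integral>\<^sup>+b. ?F (a,b) \<partial>distr M ?T (eta n)) \<le> G a" by simp
  qed
  also have "\<dots> = (\<integral>\<^sup>+\<omega>. G (xi n \<omega>) \<partial>M)"
    by (rule nn_integral_distr[OF xim]) (unfold measurable_cong_sets[OF sets_distr refl], rule G)
  finally show ?thesis .
qed


definition Z :: "nat \<Rightarrow> 'a \<Rightarrow> real" where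
  "Z n \<omega> = exp (R * disc_loss X Y I n \<omega>)"

lemma Z_xi: "\<omega> \<in> space M \<Longrightarrow> Z n \<omega> = exp (R * dl (xi n \<omega>) n)"
  by (simp add: Z_def disc_xi)

lemma Z_Suc: "\<omega> \<in> space M \<Longrightarrow>
  Z (Suc n) \<omega> = exp (R * dl (xi n \<omega>) n) * exp (R * (wf (\<lambda>k. rf k \<omega>) (Suc n) * pf (xi n \<omega>) n))"
  by (simp add: Z_def disc_eq dl_Suc xi_def dl_restrict pf_restrict distrib_left exp_add)

lemma Z_meas[measurable]: "Z n \<in> borel_measurable M"
proof -
  have "(\<lambda>\<omega>. exp (R * dl (xi n \<omega>) n)) \<in> borel_measurable M"
    using measurable_compose[OF xi_meas dl_meas[of n n]] by measurable
  then show ?thesis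
    by (subst measurable_cong[where g="\<lambda>\<omega>. exp (R * dl (xi n \<omega>) n)"]) (auto simp: Z_xi)
qed

lemma keyZ:
  assumes G[measurable]: "G \<in> borel_measurable (PiM (JJ n) (\<lambda>_. borel))"
  shows "(\<integral>\<^sup>+\<omega>. G (xi n \<omega>) * ennreal (Z (Suc n) \<omega>) \<partial>M) \<le> (\<integral>\<^sup>+\<omega>. G (xi n \<omega>) * ennreal (Z n \<omega>) \<partial>M)"
proof -
  have dm[measurable]: "(\<lambda>a. dl a n) \<in> borel_measurable (PiM (JJ n) (\<lambda>_. borel))" by (rule dl_meas) simp
  have G'[measurable]: "(\<lambda>a. G a * ennreal (exp (R * dl a n))) \<in> borel_measurable (PiM (JJ n) (\<lambda>_. borel))"
    by measurable
  have "(\<integral>\<^sup>+\<omega>. G (xi n \<omega>) * ennreal (Z (Suc n) \<omega>) \<partial>M)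
      = (\<integral>\<^sup>+\<omega>. (G (xi n \<omega>) * ennreal (exp (R * dl (xi n \<omega>) n))) * ennreal (exp (R * (wf (\<lambda>k. rf k \<omega>) (Suc n) * pf (xi n \<omega>) n))) \<partial>M)"
    by (intro nn_integral_cong) (simp add: Z_Suc ennreal_mult mult.assoc)
  also have "\<dots> \<le> (\<integral>\<^sup>+\<omega>. G (xi n \<omega>) * ennreal (exp (R * dl (xi n \<omega>) n)) \<partial>M)"
    by (rule key[OF G'])
  also have "\<dots> = (\<integral>\<^sup>+\<omega>. G (xi n \<omega>) * ennreal (Z n \<omega>) \<partial>M)"
    by (intro nn_integral_cong) (simp add: Z_xi)
  finally show ?thesis .
qed

lemma Z0: "Z 0 \<omega> = 1"
  by (simp add: Z_def disc_loss_def)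

lemma Z_nn: "(\<integral>\<^sup>+\<omega>. ennreal (Z n \<omega>) \<partial>M) \<le> 1"
proof (induction n)
  case 0
  then show ?case by (simp add: Z0 emeasure_space_1)
next
  case (Suc n)
  have "(\<integral>\<^sup>+\<omega>. (\<lambda>_. 1) (xi n \<omega>) * ennreal (Z (Suc n) \<omega>) \<partial>M) \<le> (\<integral>\<^sup>+\<omega>. (\<lambda>_. 1) (xi n \<omega>) * ennreal (Z n \<omega>) \<partial>M)"
    by (rule keyZ) simp
  then show ?case using Suc by simp
qed

lemma Z_int: "integrable M (Z n)"
proof (rule integrableI_nonneg)
  show "(\<integral>\<^sup>+x. ennreal (Z n x) \<partial>M) < \<infinity>"
    using Z_nn[of n] by (rule le_less_trans) simp
qed (auto simp: Z_def)


lemma Z_eq: "(\<lambda>k \<omega>. exp (R * disc_loss X Y I k \<omega>)) = Z"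
  by (simp add: Z_def fun_eq_iff)

lemma intA_le:
  assumes A: "A \<in> sets (vimage_algebra (space M) (xi n) (PiM (JJ n) (\<lambda>_. borel)))"
    and AM: "A \<in> sets M"
  shows "(\<integral>\<omega>. Z (Suc n) \<omega> * indicator A \<omega> \<partial>M) \<le> (\<integral>\<omega>. Z n \<omega> * indicator A \<omega> \<partial>M)"
proof -
  let ?S = "PiM (JJ n) (\<lambda>_. borel)"
  have xs: "xi n \<in> space M \<rightarrow> space ?S" using xi_meas by (auto dest: measurable_space)
  obtain B where B: "B \<in> sets ?S" and AB: "A = xi n -` B \<inter> space M"
    using A unfolding sets_vimage_algebra2[OF xs] by auto
  have eq: "ennreal (Z k \<omega> * indicator A \<omega>) = indicator B (xi n \<omega>) * ennreal (Z k \<omega>)" if "\<omega> \<in> space M" for k \<omega>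
    using that by (auto simp: AB indicator_def)
  have "(\<integral>\<^sup>+\<omega>. ennreal (Z (Suc n) \<omega> * indicator A \<omega>) \<partial>M) = (\<integral>\<^sup>+\<omega>. indicator B (xi n \<omega>) * ennreal (Z (Suc n) \<omega>) \<partial>M)"
    by (intro nn_integral_cong) (simp add: eq)
  also have "\<dots> \<le> (\<integral>\<^sup>+\<omega>. indicator B (xi n \<omega>) * ennreal (Z n \<omega>) \<partial>M)"
    by (rule keyZ) (use B in measurable)
  also have "\<dots> = (\<integral>\<^sup>+\<omega>. ennreal (Z n \<omega> * indicator A \<omega>) \<partial>M)"
    by (intro nn_integral_cong) (simp add: eq)
  finally have le: "(\<integral>\<^sup>+\<omega>. ennreal (Z (Suc n) \<omega> * indicator A \<omega>) \<partial>M) \<le> (\<integral>\<^sup>+\<omega>. ennreal (Z n \<omega> * indicator A \<omega>) \<partial>M)" .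
  have i: "integrable M (\<lambda>\<omega>. Z k \<omega> * indicator A \<omega>)" for k
    by (rule integrable_real_mult_indicator[OF AM Z_int])
  have nn: "AE \<omega> in M. 0 \<le> Z k \<omega> * indicator A \<omega>" for k
    by (auto simp: Z_def)
  from le show ?thesis
    unfolding nn_integral_eq_integral[OF i nn]
    by (subst (asm) ennreal_le_iff) (auto intro!: integral_nonneg_AE simp: Z_def)
qed

lemma supermart:
  assumes n: "n \<ge> 1"
  shows "AE \<omega> in M. real_cond_exp M (gen_sigma M Z n) (Z (Suc n)) \<omega> \<le> Z n \<omega>"
proof -
  let ?S = "PiM (JJ n) (\<lambda>_. borel)"
  define F where "F = gen_sigma M Z n"
  define gens where "gens = {Z i -` A \<inter> space M | i A. i \<in> {1..n} \<and> A \<in> sets borel}"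
  have gsub: "gens \<subseteq> sets M"
    unfolding gens_def by (auto intro: measurable_sets[OF Z_meas])
  have gPow: "gens \<subseteq> Pow (space M)" unfolding gens_def by auto
  have sF: "sets F = sigma_sets (space M) gens"
    unfolding F_def gen_sigma_def gens_def[symmetric] using gPow by (rule sets_measure_of)
  have spF: "space F = space M"
    unfolding F_def gen_sigma_def gens_def[symmetric] using gPow by (rule space_measure_of)
  have subalg: "subalgebra M F"
    unfolding subalgebra_def sF spF using sets.sigma_sets_subset[OF gsub] by simp
  interpret F: sigma_finite_subalgebra M F
    by (rule finite_measure_subalgebra_is_sigma_finite) (unfold_locales, rule subalg)
  have ZnF[measurable]: "Z n \<in> borel_measurable F"
  proof (rule measurableI)
    fix A :: "real set" assume "A \<in> sets borel"
    then have "Z n -` A \<inter> space M \<in> gens" unfolding gens_def using n by auto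
    then show "Z n -` A \<inter> space F \<in> sets F" unfolding sF spF by auto
  qed auto
  have xs: "xi n \<in> space M \<rightarrow> space ?S" using xi_meas by (auto dest: measurable_space)
  have Fvim: "sets F \<subseteq> sets (vimage_algebra (space M) (xi n) ?S)"
  proof -
    have "gens \<subseteq> sets (vimage_algebra (space M) (xi n) ?S)"
    proof
      fix G assume "G \<in> gens"
      then obtain i A where i: "i \<in> {1..n}" and A: "A \<in> sets borel" and G: "G = Z i -` A \<inter> space M"
        unfolding gens_def by auto
      have dm0[measurable]: "(\<lambda>a. dl a i) \<in> borel_measurable ?S"
        using i by (intro dl_meas) auto
      have dm: "(\<lambda>a. exp (R * dl a i)) \<in> borel_measurable ?S"
        by measurable
      let ?B = "(\<lambda>a. exp (R * dl a i)) -` A \<inter> space ?S"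
      have B: "?B \<in> sets ?S" by (rule measurable_sets[OF dm A])
      have GB: "G = xi n -` ?B \<inter> space M"
        using i xs by (auto simp: G Z_def disc_xi)
      show "G \<in> sets (vimage_algebra (space M) (xi n) ?S)"
        unfolding sets_vimage_algebra2[OF xs] using B GB by blast
    qed
    from sets.sigma_sets_subset[OF this] show ?thesis unfolding sF by simp
  qed
  let ?ce = "real_cond_exp M F (Z (Suc n))"
  define D where "D = {\<omega> \<in> space M. Z n \<omega> < ?ce \<omega>}"
  have DF: "D \<in> sets F"
  proof -
    have "{\<omega> \<in> space F. Z n \<omega> < ?ce \<omega>} \<in> sets F" by measurable
    then show ?thesis unfolding D_def spF .
  qed
  have DM: "D \<in> sets M" using DF subalg by (auto simp: subalgebra_def)
  have ceint: "integrable M ?ce" by (rule F.real_cond_exp_int(1)[OF Z_int])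
  have "(\<integral>\<omega>. ?ce \<omega> * indicator D \<omega> \<partial>M) = (\<integral>\<omega>. Z (Suc n) \<omega> * indicator D \<omega> \<partial>M)"
    using F.real_cond_exp_intA[OF Z_int DF] by (simp add: set_lebesgue_integral_def mult.commute)
  also have "\<dots> \<le> (\<integral>\<omega>. Z n \<omega> * indicator D \<omega> \<partial>M)"
    by (rule intA_le[OF _ DM]) (use Fvim DF in auto)
  finally have le: "(\<integral>\<omega>. ?ce \<omega> * indicator D \<omega> \<partial>M) \<le> (\<integral>\<omega>. Z n \<omega> * indicator D \<omega> \<partial>M)" .
  let ?h = "\<lambda>\<omega>. (?ce \<omega> - Z n \<omega>) * indicator D \<omega>"
  have hint: "integrable M ?h"
    by (rule integrable_real_mult_indicator[OF DM]) (intro Bochner_Integration.integrable_diff ceint Z_int)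
  have hnn: "AE \<omega> in M. 0 \<le> ?h \<omega>" by (auto simp: D_def indicator_def)
  have "integral\<^sup>L M ?h = (\<integral>\<omega>. ?ce \<omega> * indicator D \<omega> \<partial>M) - (\<integral>\<omega>. Z n \<omega> * indicator D \<omega> \<partial>M)"
    unfolding left_diff_distrib
    by (intro Bochner_Integration.integral_diff integrable_real_mult_indicator[OF DM] ceint Z_int)
  with le have "integral\<^sup>L M ?h \<le> 0" by simp
  moreover have "0 \<le> integral\<^sup>L M ?h" using hnn by (rule integral_nonneg_AE)
  ultimately have "integral\<^sup>L M ?h = 0" by simp
  then have "AE \<omega> in M. ?h \<omega> = 0" using integral_nonneg_eq_0_iff_AE[OF hint hnn] by simp
  moreover have "AE \<omega> in M. \<omega> \<in> space M" by (rule AE_space)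
  ultimately show ?thesis
    unfolding F_def[symmetric] by eventually_elim (auto simp: D_def indicator_def split: if_splits)
qed


lemma disc_meas[measurable]: "disc_loss X Y I n \<in> borel_measurable M"
proof -
  have "(\<lambda>\<omega>. dl (xi n \<omega>) n) \<in> borel_measurable M"
    using measurable_compose[OF xi_meas dl_meas[of n n]] by simp
  then show ?thesis
    by (subst measurable_cong[where g="\<lambda>\<omega>. dl (xi n \<omega>) n"]) (auto simp: disc_xi)
qed

lemma surplus_eq: "\<omega> \<in> space M \<Longrightarrow>
  surplus u X Y I n \<omega> = (u - disc_loss X Y I n \<omega>) * (\<Prod>j\<in>{1..n}. (1 + I j \<omega>))"
proof (induction n)
  case 0
  then show ?case by (simp add: disc_loss_def)
next
  case (Suc n)
  let ?Q = "\<Prod>j\<in>{1..n}. (1 + I j \<omega>)"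
  have Ipos: "0 \<le> I j \<omega>" if "j \<ge> 1" for j using nonneg[OF that Suc.prems] by simp
  have Q: "0 < ?Q" using Ipos by (intro prod_pos) (auto simp: add_pos_nonneg)
  have inv: "(\<Prod>j\<in>{1..<Suc n}. inverse (1 + I j \<omega>)) = inverse ?Q"
    using prod_inversef[of "\<lambda>j. 1 + I j \<omega>" "{1..n}"] by (simp add: o_def atLeastLessThanSuc_atLeastAtMost)
  have I1: "1 + I (Suc n) \<omega> > 0" using Ipos[of "Suc n"] by simp
  have ds: "disc_loss X Y I (Suc n) \<omega> = disc_loss X Y I n \<omega> + (Y (Suc n) \<omega> * inverse (1 + I (Suc n) \<omega>) - X (Suc n) \<omega>) * inverse ?Q"
  proof -
    have "disc_loss X Y I (Suc n) \<omega> = disc_loss X Y I n \<omega> + (Y (Suc n) \<omega> * inverse (1 + I (Suc n) \<omega>) - X (Suc n) \<omega>) * (\<Prod>j\<in>{1..<Suc n}. inverse (1 + I j \<omega>))"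
      unfolding disc_loss_def by (subst sum.cl_ivl_Suc) simp
    then show ?thesis unfolding inv .
  qed
  have pr: "(\<Prod>j\<in>{1..Suc n}. (1 + I j \<omega>)) = ?Q * (1 + I (Suc n) \<omega>)" by simp
  show ?case
    using Q I1 unfolding surplus.simps Suc.IH[OF Suc.prems] ds pr by (rule alg_aux)
qed

definition BB :: "real \<Rightarrow> nat \<Rightarrow> 'a set" where
  "BB u N = {\<omega> \<in> space M. \<forall>k\<in>{1..N}. disc_loss X Y I k \<omega> \<le> u}"

abbreviation "V u \<equiv> Vg Z (BB u)"

lemma BB_mono: "BB u (Suc N) \<subseteq> BB u N" by (auto simp: BB_def)

lemma V_in_B: "\<omega> \<in> BB u N \<Longrightarrow> V u N \<omega> = Z N \<omega>"
  by (cases N) (use BB_mono in auto)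

lemma V_out_B: "\<omega> \<in> space M \<Longrightarrow> \<omega> \<notin> BB u N \<Longrightarrow> exp (R * u) < V u N \<omega>"
proof (induction N)
  case 0
  then show ?case by (simp add: BB_def)
next
  case (Suc N)
  show ?case
  proof (cases "\<omega> \<in> BB u N")
    case True
    obtain k where k: "k \<in> {1..Suc N}" "u < disc_loss X Y I k \<omega>"
      using Suc.prems by (auto simp: BB_def not_le)
    have "k \<notin> {1..N}"
    proof
      assume "k \<in> {1..N}"
      with True have "disc_loss X Y I k \<omega> \<le> u" by (auto simp: BB_def)
      with k(2) show False by simp
    qed
    then have "k = Suc N" using k(1) by auto
    then have "u < disc_loss X Y I (Suc N) \<omega>" using k(2) by simp
    then show ?thesis using True Rpos by (simp add: Z_def)
  next
    case False
    then show ?thesis using Suc by simp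
  qed
qed

lemma BB_sets: "BB u N \<in> sets M"
  unfolding BB_def by measurable

lemma BB_xi: "\<exists>B'\<in>sets (PiM (JJ N) (\<lambda>_. borel)). \<forall>\<omega>\<in>space M. (\<omega> \<in> BB u N) = (xi N \<omega> \<in> B')"
proof -
  let ?S = "PiM (JJ N) (\<lambda>_. borel)"
  let ?B = "{a \<in> space ?S. \<forall>k\<in>{1..N}. dl a k \<le> u}"
  have "Measurable.pred ?S (\<lambda>a. \<forall>k\<in>{1..N}. dl a k \<le> u)"
  proof (rule pred_intros_finite)
    fix k assume "k \<in> {1..N}"
    then have [measurable]: "(\<lambda>a. dl a k) \<in> borel_measurable ?S" by (intro dl_meas) auto
    show "Measurable.pred ?S (\<lambda>a. dl a k \<le> u)" by measurable
  qed simp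
  then have "?B \<in> sets ?S" by (simp add: pred_def)
  moreover have "\<forall>\<omega>\<in>space M. (\<omega> \<in> BB u N) = (xi N \<omega> \<in> ?B)"
  proof -
    have dx: "\<And>\<omega> k. \<omega> \<in> space M \<Longrightarrow> k \<in> {1..N} \<Longrightarrow> dl (xi N \<omega>) k = disc_loss X Y I k \<omega>"
      by (rule disc_xi[symmetric]) auto
    show ?thesis using measurable_space[OF xi_meas] by (auto simp: BB_def dx)
  qed
  ultimately show ?thesis by blast
qed

lemma V_meas[measurable]: "V u N \<in> borel_measurable M"
proof (induction N)
  case 0 then show ?case by simp
next
  case (Suc N)
  have [measurable]: "BB u N \<in> sets M" by (rule BB_sets)
  have [measurable]: "V u N \<in> borel_measurable M" by (rule Suc)
  show ?case by simp measurable
qed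

lemma V_nn: "(\<integral>\<^sup>+\<omega>. ennreal (V u N \<omega>) \<partial>M) \<le> 1"
proof (induction N)
  case 0
  then show ?case by (simp add: Z0 emeasure_space_1)
next
  case (Suc N)
  obtain B' where B': "B' \<in> sets (PiM (JJ N) (\<lambda>_. borel))" and eqB: "\<forall>\<omega>\<in>space M. (\<omega> \<in> BB u N) = (xi N \<omega> \<in> B')"
    using BB_xi by blast
  have Bs[measurable]: "BB u N \<in> sets M" by (rule BB_sets)
  have ind: "indicator (BB u N) \<omega> = (indicator B' (xi N \<omega>) :: ennreal)" if "\<omega> \<in> space M" for \<omega>
    using eqB that by (auto simp: indicator_def)
  have "(\<integral>\<^sup>+\<omega>. ennreal (V u (Suc N) \<omega>) \<partial>M)
      = (\<integral>\<^sup>+\<omega>. indicator (BB u N) \<omega> * ennreal (Z (Suc N) \<omega>) + indicator (space M - BB u N) \<omega> * ennreal (V u N \<omega>) \<partial>M)"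
    by (intro nn_integral_cong) (auto simp: indicator_def)
  also have "\<dots> = (\<integral>\<^sup>+\<omega>. indicator (BB u N) \<omega> * ennreal (Z (Suc N) \<omega>) \<partial>M) + (\<integral>\<^sup>+\<omega>. indicator (space M - BB u N) \<omega> * ennreal (V u N \<omega>) \<partial>M)"
    by (rule nn_integral_add) measurable
  also have "(\<integral>\<^sup>+\<omega>. indicator (BB u N) \<omega> * ennreal (Z (Suc N) \<omega>) \<partial>M) = (\<integral>\<^sup>+\<omega>. indicator B' (xi N \<omega>) * ennreal (Z (Suc N) \<omega>) \<partial>M)"
    by (intro nn_integral_cong) (simp add: ind)
  also have "\<dots> \<le> (\<integral>\<^sup>+\<omega>. indicator B' (xi N \<omega>) * ennreal (Z N \<omega>) \<partial>M)"
    by (rule keyZ) (use B' in measurable)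
  also have "\<dots> = (\<integral>\<^sup>+\<omega>. indicator (BB u N) \<omega> * ennreal (V u N \<omega>) \<partial>M)"
    using eqB by (intro nn_integral_cong) (auto simp: V_in_B indicator_def)
  also have "(\<integral>\<^sup>+\<omega>. indicator (BB u N) \<omega> * ennreal (V u N \<omega>) \<partial>M) + (\<integral>\<^sup>+\<omega>. indicator (space M - BB u N) \<omega> * ennreal (V u N \<omega>) \<partial>M)
      = (\<integral>\<^sup>+\<omega>. indicator (BB u N) \<omega> * ennreal (V u N \<omega>) + indicator (space M - BB u N) \<omega> * ennreal (V u N \<omega>) \<partial>M)"
    by (rule nn_integral_add[symmetric]) measurable
  also have "\<dots> = (\<integral>\<^sup>+\<omega>. ennreal (V u N \<omega>) \<partial>M)"
    by (intro nn_integral_cong) (auto simp: indicator_def)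
  finally show ?case using Suc by (auto intro: order_trans add_right_mono)
qed

lemma ruinN: "measure M (space M - BB u N) \<le> exp (- R * u)"
proof -
  have Bs[measurable]: "BB u N \<in> sets M" by (rule BB_sets)
  have "ennreal (exp (R * u)) * emeasure M (space M - BB u N) = (\<integral>\<^sup>+\<omega>. ennreal (exp (R * u)) * indicator (space M - BB u N) \<omega> \<partial>M)"
    by (simp add: nn_integral_cmult_indicator)
  also have "\<dots> \<le> (\<integral>\<^sup>+\<omega>. ennreal (V u N \<omega>) \<partial>M)"
    by (intro nn_integral_mono) (auto simp: indicator_def intro!: ennreal_leI less_imp_le[OF V_out_B])
  also have "\<dots> \<le> 1" by (rule V_nn)
  finally have "ennreal (exp (R * u) * measure M (space M - BB u N)) \<le> ennreal 1"
    by (simp add: emeasure_eq_measure ennreal_mult)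
  then have "exp (R * u) * measure M (space M - BB u N) \<le> 1" by (subst (asm) ennreal_le_iff) auto
  then show ?thesis
    by (simp add: exp_minus field_simps)
qed

lemma ruin: "ruin_prob M X Y I u \<le> exp (- R * u)"
proof -
  have Q: "0 < (\<Prod>j\<in>{1..n}. (1 + I j \<omega>))" if "\<omega> \<in> space M" for n \<omega>
    using nonneg that by (intro prod_pos) (auto simp: add_pos_nonneg)
  have eq: "(\<Union>n\<in>{1..}. {\<omega> \<in> space M. surplus u X Y I n \<omega> < 0}) = (\<Union>N. space M - BB u N)"
  proof -
    have "surplus u X Y I n \<omega> < 0 \<longleftrightarrow> u < disc_loss X Y I n \<omega>" if "\<omega> \<in> space M" for n \<omega>
      using Q[OF that, of n] that by (simp add: surplus_eq mult_less_0_iff)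
    then show ?thesis by (auto simp: BB_def not_le) (meson atLeastAtMost_iff le_refl leD)
  qed
  have "(\<lambda>N. measure M (space M - BB u N)) \<longlonglongrightarrow> measure M (\<Union>N. space M - BB u N)"
  proof (rule finite_Lim_measure_incseq)
    show "range (\<lambda>N. space M - BB u N) \<subseteq> sets M" using BB_sets by auto
    show "incseq (\<lambda>N. space M - BB u N)"
      by (rule incseq_SucI) (use BB_mono in auto)
  qed
  then have "measure M (\<Union>N. space M - BB u N) \<le> exp (- R * u)"
    by (rule LIMSEQ_le_const2) (use ruinN in auto)
  then show ?thesis unfolding ruin_prob_def eq .
qed

end

theorem lemma2p4:
  fixes M :: "'a measure" and X Y I :: "nat \<Rightarrow> 'a \<Rightarrow> real" and R :: real
  assumes prob: "prob_space M"
    and indep: "prob_space.indep_vars M (\<lambda>_. borel) (risk_family X Y I) ({0,1,2} \<times> {1..})"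
    and idX: "\<And>n. n \<ge> 1 \<Longrightarrow> distr M borel (X n) = distr M borel (X 1)"
    and idY: "\<And>n. n \<ge> 1 \<Longrightarrow> distr M borel (Y n) = distr M borel (Y 1)"
    and idI: "\<And>n. n \<ge> 1 \<Longrightarrow> distr M borel (I n) = distr M borel (I 1)"
    and nonneg: "\<And>n \<omega>. n \<ge> 1 \<Longrightarrow> \<omega> \<in> space M \<Longrightarrow> X n \<omega> \<ge> 0 \<and> Y n \<omega> \<ge> 0 \<and> I n \<omega> \<ge> 0"
    and intX: "\<And>n. n \<ge> 1 \<Longrightarrow> integrable M (X n)"
    and intY: "\<And>n. n \<ge> 1 \<Longrightarrow> integrable M (Y n)"
    and intI: "\<And>n. n \<ge> 1 \<Longrightarrow> integrable M (I n)"
    and Rpos: "R > 0"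
    and Rcond: "(\<integral>\<^sup>+ \<omega>. ennreal (exp (R * (Y 1 \<omega> * inverse (1 + I 1 \<omega>) - X 1 \<omega>))) \<partial>M) \<le> 1"
  shows "(\<forall>n\<ge>1. integrable M (\<lambda>\<omega>. exp (R * disc_loss X Y I n \<omega>)) \<and>
           (AE \<omega> in M. real_cond_exp M (gen_sigma M (\<lambda>k \<omega>. exp (R * disc_loss X Y I k \<omega>)) n)
                (\<lambda>\<omega>. exp (R * disc_loss X Y I (Suc n) \<omega>)) \<omega>
              \<le> exp (R * disc_loss X Y I n \<omega>)))
      \<and> (\<forall>u>0. ruin_prob M X Y I u \<le> exp (- R * u))"
proof -
  interpret r: risk M X Y I R
    by (rule risk.intro[OF prob risk_axioms.intro]) (fact indep idX idY idI nonneg Rpos Rcond)+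
  have Zk: "\<And>k. (\<lambda>\<omega>. exp (R * disc_loss X Y I k \<omega>)) = r.Z k"
    by (simp add: r.Z_def fun_eq_iff)
  have Zp: "\<And>k \<omega>. exp (R * disc_loss X Y I k \<omega>) = r.Z k \<omega>"
    by (simp add: r.Z_def)
  show ?thesis
    unfolding r.Z_eq Zk Zp using r.Z_int r.supermart r.ruin by auto
qed

end
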